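(* Let $\mathcal{P}_1,\dots,\mathcal{P}_k$ be finite posets with $p_j=|\mathcal{P}_j|$ and assume that $\mathcal{C}(\mathcal{P}_j)$ is simplicial for every $j=1,\dots,k$. For each $j$ let $\mathbf{A}^{(j)}\in\mathrm{GL}(p_j)$ be an invertible linear map with $\mathbf{A}^{(j)}(\mathcal{C}(\mathcal{P}_j))=\mathbb{R}^{p_j}_+$. If $\mathbf{T}\in\mathcal{N}_{<\infty}$, then $\mathrm{NDrank}(\mathbf{T})=\mathrm{rank}_+\big((\otimes_{j=1}^k\mathbf{A}^{(j)})(\mathbf{T})\big)$.
   Context: For a finite poset $\mathcal{Q}$, the order cone $\mathcal{C}(\mathcal{Q})\subset\mathbb{R}^{\mathcal{Q}}$ is the set of functions $\mathbf{f}$ on $\mathcal{Q}$ with $f_x\ge0$ for all $x$ and $f_x\le f_y$ whenever $x\preceq y$. A cone in $\mathbb{R}^p$ is simplicial if it is the conical hull of $p$ linearly independent vectors. Tensors are elements of $\mathbb{R}^{\mathcal{P}_1\times\cdots\times\mathcal{P}_k}=\otimes_j\mathbb{R}^{p_j}$, with the product poset ordered componentwise. The nondecreasing rank $\mathrm{NDrank}(\mathbf{T})$ is the minimal $r$ such that $\mathbf{T}=\sum_{i=1}^r\otimes_{j=1}^k\mathbf{v}^{(ij)}$ with all $\mathbf{v}^{(ij)}\in\mathcal{C}(\mathcal{P}_j)$ ($\infty$ if no such decomposition exists), and $\mathcal{N}_{<\infty}$ is the set of tensors of finite nondecreasing rank. $\mathrm{rank}_+(\mathbf{S})$ is the minimal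 $r$ such that $\mathbf{S}=\sum_{i=1}^r\otimes_j\mathbf{v}^{(ij)}$ with all $\mathbf{v}^{(ij)}$ entrywise nonnegative. The linear map $\otimes_j\mathbf{A}^{(j)}$ is defined in coordinates by $[(\otimes_j\mathbf{A}^{(j)})(\mathbf{T})]_{j_1\dots j_k}=\sum_{i_1,\dots,i_k}A^{(1)}_{j_1i_1}\cdots A^{(k)}_{j_ki_k}T_{i_1\dots i_k}$. *)

theory Defs
  imports "HOL-Analysis.Analysis" "HOL-Library.Extended_Nat"
begin

text \<open>Vectors in R^S (S a finite carrier) are functions vanishing outside S.\<close>
definition vecs :: "'a set \<Rightarrow> ('a \<Rightarrow> real) set" where
  "vecs S = {f. \<forall>x. x \<notin> S \<longrightarrow> f x = 0}"

definition is_poset :: "'a set \<Rightarrow> ('a \<Rightarrow> 'a \<Rightarrow> bool) \<Rightarrow> bool" where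
  "is_poset S le \<longleftrightarrow> finite S \<and> (\<forall>x\<in>S. le x x)
     \<and> (\<forall>x\<in>S. \<forall>y\<in>S. le x y \<and> le y x \<longrightarrow> x = y)
     \<and> (\<forall>x\<in>S. \<forall>y\<in>S. \<forall>z\<in>S. le x y \<and> le y z \<longrightarrow> le x z)"

definition order_cone :: "'a set \<Rightarrow> ('a \<Rightarrow> 'a \<Rightarrow> bool) \<Rightarrow> ('a \<Rightarrow> real) set" where
  "order_cone S le = {f \<in> vecs S. (\<forall>x\<in>S. 0 \<le> f x) \<and> (\<forall>x\<in>S. \<forall>y\<in>S. le x y \<longrightarrow> f x \<le> f y)}"

definition nonneg_orthant :: "'a set \<Rightarrow> ('a \<Rightarrow> real) set" where
  "nonneg_orthant S = {f \<in> vecs S. \<forall>x\<in>S. 0 \<le> f x}"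

definition lin_indep_vecs :: "('a \<Rightarrow> real) set \<Rightarrow> bool" where
  "lin_indep_vecs V \<longleftrightarrow> (\<forall>c. (\<forall>x. (\<Sum>v\<in>V. c v * v x) = 0) \<longrightarrow> (\<forall>v\<in>V. c v = 0))"

definition simplicial :: "'a set \<Rightarrow> ('a \<Rightarrow> real) set \<Rightarrow> bool" where
  "simplicial S C \<longleftrightarrow> (\<exists>V. V \<subseteq> vecs S \<and> finite V \<and> card V = card S \<and> lin_indep_vecs V
      \<and> C = {(\<lambda>x. \<Sum>v\<in>V. c v * v x) | c. \<forall>v\<in>V. 0 \<le> c v})"

definition mat_map :: "'a set \<Rightarrow> ('a \<Rightarrow> 'a \<Rightarrow> real) \<Rightarrow> ('a \<Rightarrow> real) \<Rightarrow> ('a \<Rightarrow> real)" where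
  "mat_map S A f = (\<lambda>y. if y \<in> S then (\<Sum>x\<in>S. A y x * f x) else 0)"

definition tidx :: "nat \<Rightarrow> (nat \<Rightarrow> 'a set) \<Rightarrow> (nat \<Rightarrow> 'a) set" where
  "tidx k P = PiE {..<k} P"

definition outer :: "nat \<Rightarrow> (nat \<Rightarrow> 'a \<Rightarrow> real) \<Rightarrow> (nat \<Rightarrow> 'a) \<Rightarrow> real" where
  "outer k v = (\<lambda>i. \<Prod>j<k. v j (i j))"

definition decomp :: "nat \<Rightarrow> (nat \<Rightarrow> 'a set) \<Rightarrow> (nat \<Rightarrow> ('a \<Rightarrow> real) set)
     \<Rightarrow> ((nat \<Rightarrow> 'a) \<Rightarrow> real) \<Rightarrow> nat \<Rightarrow> bool" where
  "decomp k P K T r \<longleftrightarrow> (\<exists>v :: nat \<Rightarrow> nat \<Rightarrow> 'a \<Rightarrow> real.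
      (\<forall>i<r. \<forall>j<k. v i j \<in> K j) \<and>
      (\<forall>idx\<in>tidx k P. T idx = (\<Sum>i<r. outer k (v i) idx)))"

definition NDrank :: "nat \<Rightarrow> (nat \<Rightarrow> 'a set) \<Rightarrow> (nat \<Rightarrow> 'a \<Rightarrow> 'a \<Rightarrow> bool)
     \<Rightarrow> ((nat \<Rightarrow> 'a) \<Rightarrow> real) \<Rightarrow> enat" where
  "NDrank k P le T = Inf {enat r | r. decomp k P (\<lambda>j. order_cone (P j) (le j)) T r}"

definition finite_NDrank :: "nat \<Rightarrow> (nat \<Rightarrow> 'a set) \<Rightarrow> (nat \<Rightarrow> 'a \<Rightarrow> 'a \<Rightarrow> bool)
     \<Rightarrow> ((nat \<Rightarrow> 'a) \<Rightarrow> real) \<Rightarrow> bool" where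
  "finite_NDrank k P le T \<longleftrightarrow> (\<exists>r. decomp k P (\<lambda>j. order_cone (P j) (le j)) T r)"

definition nnrank :: "nat \<Rightarrow> (nat \<Rightarrow> 'a set) \<Rightarrow> ((nat \<Rightarrow> 'a) \<Rightarrow> real) \<Rightarrow> enat" where
  "nnrank k P S = Inf {enat r | r. decomp k P (\<lambda>j. nonneg_orthant (P j)) S r}"

definition tensor_map :: "nat \<Rightarrow> (nat \<Rightarrow> 'a set) \<Rightarrow> (nat \<Rightarrow> 'a \<Rightarrow> 'a \<Rightarrow> real)
     \<Rightarrow> ((nat \<Rightarrow> 'a) \<Rightarrow> real) \<Rightarrow> ((nat \<Rightarrow> 'a) \<Rightarrow> real)" where
  "tensor_map k P A T = (\<lambda>jdx. if jdx \<in> tidx k P then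
      (\<Sum>idx\<in>tidx k P. (\<Prod>j<k. A j (jdx j) (idx j)) * T idx) else 0)"

end

theory Submission
  imports Defs "HOL-Library.FuncSet"
begin

lemma tmap_decomp:
  assumes finP: "\<And>j. j < k \<Longrightarrow> finite (P j)"
    and Teq: "\<forall>idx\<in>tidx k P. T idx = (\<Sum>i<r. outer k (v i) idx)"
    and jdx: "jdx \<in> tidx k P"
  shows "tensor_map k P C T jdx = (\<Sum>i<r. outer k (\<lambda>j. mat_map (P j) (C j) (v i j)) jdx)"
proof -
  have "tensor_map k P C T jdx = (\<Sum>idx\<in>tidx k P. (\<Prod>j<k. C j (jdx j) (idx j)) * (\<Sum>i<r. outer k (v i) idx))"
    unfolding tensor_map_def using jdx Teq by (auto intro!: sum.cong)
  also have "\<dots> = (\<Sum>i<r. \<Sum>idx\<in>tidx k P. \<Prod>j<k. (C j (jdx j) (idx j) * v i j (idx j)))"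
    by (simp add: sum_distrib_left outer_def prod.distrib sum.swap[where A="tidx k P"])
  also have "\<dots> = (\<Sum>i<r. \<Prod>j<k. \<Sum>x\<in>P j. C j (jdx j) x * v i j x)"
    unfolding tidx_def using finP by (intro sum.cong refl, subst prod_sum_PiE) auto
  also have "\<dots> = (\<Sum>i<r. outer k (\<lambda>j. mat_map (P j) (C j) (v i j)) jdx)"
    unfolding outer_def mat_map_def using jdx unfolding tidx_def by (auto intro!: sum.cong prod.cong)
  finally show ?thesis .
qed

lemma prod_delta:
  "(\<Prod>j<(k::nat). if l j = m j then 1 else (0::real)) = (if \<forall>j<k. l j = m j then 1 else 0)"
proof (cases "\<forall>j<k. l j = m j")
  case True then show ?thesis by simp
next
  case False
  then obtain j where "j < k" "l j \<noteq> m j" by auto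
  have "(\<Prod>j<k. if l j = m j then 1 else (0::real)) = 0"
    using \<open>j < k\<close> \<open>l j \<noteq> m j\<close> by (subst prod_zero_iff) auto
  then show ?thesis using False by simp
qed

lemma tmap_comp:
  assumes finP: "\<And>j. j < k \<Longrightarrow> finite (P j)"
    and delta: "\<And>j l x. j < k \<Longrightarrow> l \<in> P j \<Longrightarrow> x \<in> P j \<Longrightarrow>
        (\<Sum>y\<in>P j. B j l y * A j y x) = (if l = x then 1 else 0)"
    and l: "l \<in> tidx k P"
  shows "tensor_map k P B (tensor_map k P A T) l = T l"
proof -
  have fin: "finite (tidx k P)" unfolding tidx_def using finP by (intro finite_PiE) auto
  have "tensor_map k P B (tensor_map k P A T) l =
     (\<Sum>m\<in>tidx k P. (\<Prod>j<k. B j (l j) (m j)) * (\<Sum>idx\<in>tidx k P. (\<Prod>j<k. A j (m j) (idx j)) * T idx))"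
    unfolding tensor_map_def using l by (auto intro!: sum.cong)
  also have "\<dots> = (\<Sum>m\<in>tidx k P. \<Sum>idx\<in>tidx k P. T idx * (\<Prod>j<k. (B j (l j) (m j) * A j (m j) (idx j))))"
    by (intro sum.cong refl) (simp add: sum_distrib_left prod.distrib mult_ac)
  also have "\<dots> = (\<Sum>idx\<in>tidx k P. \<Sum>m\<in>tidx k P. T idx * (\<Prod>j<k. (B j (l j) (m j) * A j (m j) (idx j))))"
    by (rule sum.swap)
  also have "\<dots> = (\<Sum>idx\<in>tidx k P. T idx * (\<Sum>m\<in>tidx k P. \<Prod>j<k. (B j (l j) (m j) * A j (m j) (idx j))))"
    by (simp add: sum_distrib_left)
  also have "\<dots> = (\<Sum>idx\<in>tidx k P. T idx * (\<Prod>j<k. \<Sum>y\<in>P j. B j (l j) y * A j y (idx j)))"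
    unfolding tidx_def using finP by (intro sum.cong refl arg_cong2[where f="(*)"], subst prod_sum_PiE) auto
  also have "\<dots> = (\<Sum>idx\<in>tidx k P. T idx * (\<Prod>j<k. if l j = idx j then 1 else 0))"
  proof (intro sum.cong refl arg_cong2[where f="(*)"] prod.cong)
    fix idx j assume idx: "idx \<in> tidx k P" and j: "j \<in> {..<k}"
    have "l j \<in> P j" "idx j \<in> P j" using l idx j unfolding tidx_def by (auto simp: PiE_mem)
    then show "(\<Sum>y\<in>P j. B j (l j) y * A j y (idx j)) = (if l j = idx j then 1 else 0)"
      using j by (intro delta) auto
  qed
  also have "\<dots> = (\<Sum>idx\<in>tidx k P. if idx = l then T idx else 0)"
  proof (intro sum.cong refl)
    fix idx assume idx: "idx \<in> tidx k P"
    have "(\<forall>j<k. l j = idx j) \<longleftrightarrow> idx = l"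
      using idx l unfolding tidx_def by (metis PiE_ext lessThan_iff)
    then show "T idx * (\<Prod>j<k. if l j = idx j then 1 else 0) = (if idx = l then T idx else 0)"
      by (simp add: prod_delta)
  qed
  also have "\<dots> = T l" using fin l by simp
  finally show ?thesis .
qed

lemma inv_lin:
  assumes finS: "finite S"
    and bij: "bij_betw (mat_map S A) (vecs S) (vecs S)"
    and g: "\<And>x. x \<in> S \<Longrightarrow> g x \<in> vecs S"
  shows "inv_into (vecs S) (mat_map S A) (\<lambda>y. \<Sum>x\<in>S. c x * g x y)
       = (\<lambda>l. \<Sum>x\<in>S. c x * inv_into (vecs S) (mat_map S A) (g x) l)"
proof -
  let ?M = "mat_map S A" and ?N = "inv_into (vecs S) (mat_map S A)"
  have Nv: "?N (g x) \<in> vecs S" and MN: "?M (?N (g x)) = g x" if "x \<in> S" for x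
    using bij g[OF that] by (auto simp: bij_betw_def inv_into_into f_inv_into_f)
  define h where "h = (\<lambda>l. \<Sum>x\<in>S. c x * ?N (g x) l)"
  have hv: "h \<in> vecs S" using Nv unfolding h_def vecs_def by auto
  have "?M h = (\<lambda>y. \<Sum>x\<in>S. c x * g x y)"
  proof
    fix y
    show "?M h y = (\<Sum>x\<in>S. c x * g x y)"
    proof (cases "y \<in> S")
      case True
      have "?M h y = (\<Sum>z\<in>S. A y z * (\<Sum>x\<in>S. c x * ?N (g x) z))"
        using True by (simp add: mat_map_def h_def)
      also have "\<dots> = (\<Sum>x\<in>S. c x * (\<Sum>z\<in>S. A y z * ?N (g x) z))"
        unfolding sum_distrib_left by (subst sum.swap) (simp add: mult_ac)
      also have "\<dots> = (\<Sum>x\<in>S. c x * ?M (?N (g x)) y)"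
        using True by (simp add: mat_map_def)
      also have "\<dots> = (\<Sum>x\<in>S. c x * g x y)" using MN by simp
      finally show ?thesis .
    next
      case False
      then show ?thesis using g unfolding mat_map_def vecs_def by auto
    qed
  qed
  then have "?N (\<lambda>y. \<Sum>x\<in>S. c x * g x y) = ?N (?M h)" by simp
  also have "\<dots> = h" using bij hv by (simp add: bij_betw_def inv_into_f_f)
  finally show ?thesis unfolding h_def .
qed

lemma inverse_matrix:
  fixes S :: "'a set"
  assumes finS: "finite S"
    and bij: "bij_betw (mat_map S A) (vecs S) (vecs S)"
  shows "\<exists>B. (\<forall>w\<in>vecs S. mat_map S B w = inv_into (vecs S) (mat_map S A) w)
     \<and> (\<forall>l\<in>S. \<forall>x\<in>S. (\<Sum>y\<in>S. B l y * A y x) = (if l = x then 1 else 0))"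
proof -
  let ?M = "mat_map S A" and ?N = "inv_into (vecs S) (mat_map S A)"
  define e where "e = (\<lambda>(x::'a) (y::'a). if y = x then 1 else (0::real))"
  define B where "B = (\<lambda>l x. ?N (e x) l)"
  have ev: "e x \<in> vecs S" if "x \<in> S" for x using that unfolding e_def vecs_def by auto
  have Nv: "?N w \<in> vecs S" if "w \<in> vecs S" for w
    using bij that by (auto simp: bij_betw_def inv_into_into)
  have BN: "mat_map S B w = ?N w" if w: "w \<in> vecs S" for w
  proof -
    have wsum: "w = (\<lambda>y. \<Sum>x\<in>S. w x * e x y)"
    proof
      fix y
      have "(\<Sum>x\<in>S. w x * e x y) = (\<Sum>x\<in>S. if y = x then w x else 0)"
        unfolding e_def by (intro sum.cong) auto
      also have "\<dots> = (if y \<in> S then w y else 0)" using finS by (simp add: sum.delta)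
      finally show "w y = (\<Sum>x\<in>S. w x * e x y)"
        using w unfolding vecs_def by auto
    qed
    have "?N w = (\<lambda>l. \<Sum>x\<in>S. w x * ?N (e x) l)"
      by (subst wsum, rule inv_lin[OF finS bij ev])
    moreover have "mat_map S B w = (\<lambda>l. \<Sum>x\<in>S. w x * ?N (e x) l)"
    proof
      fix l show "mat_map S B w l = (\<Sum>x\<in>S. w x * ?N (e x) l)"
        using Nv[OF ev] unfolding mat_map_def B_def vecs_def by (auto simp: mult_ac)
    qed
    ultimately show ?thesis by simp
  qed
  have "(\<Sum>y\<in>S. B l y * A y x) = (if l = x then 1 else 0)" if l: "l \<in> S" and x: "x \<in> S" for l x
  proof -
    have Me: "?M (e x) \<in> vecs S" using bij ev[OF x] by (auto simp: bij_betw_def)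
    have Mex: "?M (e x) y = (if y \<in> S then A y x else 0)" for y
    proof -
      have "(\<Sum>z\<in>S. A y z * e x z) = (\<Sum>z\<in>S. if z = x then A y z else 0)"
        unfolding e_def by (intro sum.cong) auto
      also have "\<dots> = A y x" using finS x by (simp add: sum.delta)
      finally show ?thesis unfolding mat_map_def by simp
    qed
    have "(\<Sum>y\<in>S. B l y * A y x) = (\<Sum>y\<in>S. B l y * ?M (e x) y)"
      using Mex by (intro sum.cong) auto
    also have "\<dots> = mat_map S B (?M (e x)) l"
      using l unfolding mat_map_def[of S B] by simp
    also have "\<dots> = ?N (?M (e x)) l" using BN[OF Me] by simp
    also have "\<dots> = e x l" using bij ev[OF x] by (simp add: bij_betw_def inv_into_f_f)
    finally show ?thesis unfolding e_def by auto
  qed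
  then show ?thesis using BN by blast
qed

theorem theorem4:
  fixes k :: nat
    and P :: "nat \<Rightarrow> 'a set"
    and le :: "nat \<Rightarrow> 'a \<Rightarrow> 'a \<Rightarrow> bool"
    and A :: "nat \<Rightarrow> 'a \<Rightarrow> 'a \<Rightarrow> real"
    and T :: "(nat \<Rightarrow> 'a) \<Rightarrow> real"
  assumes posets: "\<And>j. j < k \<Longrightarrow> is_poset (P j) (le j)"
    and simpl: "\<And>j. j < k \<Longrightarrow> simplicial (P j) (order_cone (P j) (le j))"
    and invertible: "\<And>j. j < k \<Longrightarrow> bij_betw (mat_map (P j) (A j)) (vecs (P j)) (vecs (P j))"
    and maps_cone: "\<And>j. j < k \<Longrightarrow>
        mat_map (P j) (A j) ` order_cone (P j) (le j) = nonneg_orthant (P j)"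
    and fin: "finite_NDrank k P le T"
  shows "NDrank k P le T = nnrank k P (tensor_map k P A T)"
proof -
  have finP: "\<And>j. j < k \<Longrightarrow> finite (P j)" using posets unfolding is_poset_def by blast
  have ex: "\<forall>j. \<exists>Bj. j < k \<longrightarrow> ((\<forall>w\<in>vecs (P j). mat_map (P j) Bj w = inv_into (vecs (P j)) (mat_map (P j) (A j)) w)
     \<and> (\<forall>l\<in>P j. \<forall>x\<in>P j. (\<Sum>y\<in>P j. Bj l y * A j y x) = (if l = x then 1 else 0)))"
  proof
    fix j
    show "\<exists>Bj. j < k \<longrightarrow> ((\<forall>w\<in>vecs (P j). mat_map (P j) Bj w = inv_into (vecs (P j)) (mat_map (P j) (A j)) w)
     \<and> (\<forall>l\<in>P j. \<forall>x\<in>P j. (\<Sum>y\<in>P j. Bj l y * A j y x) = (if l = x then 1 else 0)))"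
    proof (cases "j < k")
      case True
      from inverse_matrix[OF finP[OF True] invertible[OF True]] obtain Bj where
        "(\<forall>w\<in>vecs (P j). mat_map (P j) Bj w = inv_into (vecs (P j)) (mat_map (P j) (A j)) w)
     \<and> (\<forall>l\<in>P j. \<forall>x\<in>P j. (\<Sum>y\<in>P j. Bj l y * A j y x) = (if l = x then 1 else 0))" by (elim exE)
      then show ?thesis by (intro exI[of _ Bj] impI)
    next
      case False then show ?thesis by simp
    qed
  qed
  from choice[OF ex] obtain B where B: "\<forall>j. j < k \<longrightarrow> ((\<forall>w\<in>vecs (P j). mat_map (P j) (B j) w = inv_into (vecs (P j)) (mat_map (P j) (A j)) w)
     \<and> (\<forall>l\<in>P j. \<forall>x\<in>P j. (\<Sum>y\<in>P j. B j l y * A j y x) = (if l = x then 1 else 0)))"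
    by (elim exE)
  have BN: "\<And>j w. j < k \<Longrightarrow> w \<in> vecs (P j) \<Longrightarrow>
        mat_map (P j) (B j) w = inv_into (vecs (P j)) (mat_map (P j) (A j)) w"
    using B by blast
  have Bd: "\<And>j l x. j < k \<Longrightarrow> l \<in> P j \<Longrightarrow> x \<in> P j \<Longrightarrow>
        (\<Sum>y\<in>P j. B j l y * A j y x) = (if l = x then 1 else 0)"
    using B by blast
  have "decomp k P (\<lambda>j. order_cone (P j) (le j)) T r \<longleftrightarrow>
        decomp k P (\<lambda>j. nonneg_orthant (P j)) (tensor_map k P A T) r" for r
  proof
    assume "decomp k P (\<lambda>j. order_cone (P j) (le j)) T r"
    then obtain v where v: "\<forall>i<r. \<forall>j<k. v i j \<in> order_cone (P j) (le j)"
      and Teq: "\<forall>idx\<in>tidx k P. T idx = (\<Sum>i<r. outer k (v i) idx)"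
      unfolding decomp_def by blast
    show "decomp k P (\<lambda>j. nonneg_orthant (P j)) (tensor_map k P A T) r"
      unfolding decomp_def
    proof (intro exI[of _ "\<lambda>i j. mat_map (P j) (A j) (v i j)"] conjI ballI allI impI)
      fix i j assume "i < r" "j < k"
      then show "mat_map (P j) (A j) (v i j) \<in> nonneg_orthant (P j)"
        using v maps_cone by blast
    next
      fix idx assume "idx \<in> tidx k P"
      then show "tensor_map k P A T idx = (\<Sum>i<r. outer k (\<lambda>j. mat_map (P j) (A j) (v i j)) idx)"
        using tmap_decomp[OF finP Teq] by blast
    qed
  next
    assume "decomp k P (\<lambda>j. nonneg_orthant (P j)) (tensor_map k P A T) r"
    then obtain w where w: "\<forall>i<r. \<forall>j<k. w i j \<in> nonneg_orthant (P j)"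
      and Seq: "\<forall>idx\<in>tidx k P. tensor_map k P A T idx = (\<Sum>i<r. outer k (w i) idx)"
      unfolding decomp_def by blast
    show "decomp k P (\<lambda>j. order_cone (P j) (le j)) T r"
      unfolding decomp_def
    proof (intro exI[of _ "\<lambda>i j. mat_map (P j) (B j) (w i j)"] conjI ballI allI impI)
      fix i j assume ij: "i < r" "j < k"
      then have wo: "w i j \<in> nonneg_orthant (P j)" using w by blast
      then obtain c where c: "c \<in> order_cone (P j) (le j)" and wc: "w i j = mat_map (P j) (A j) c"
        using maps_cone[OF ij(2)] by (metis imageE)
      have cv: "c \<in> vecs (P j)" using c unfolding order_cone_def by blast
      have "mat_map (P j) (B j) (w i j) = inv_into (vecs (P j)) (mat_map (P j) (A j)) (w i j)"
        using BN[OF ij(2)] wo unfolding nonneg_orthant_def by blast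
      also have "\<dots> = c" using wc invertible[OF ij(2)] cv
        by (simp add: bij_betw_def inv_into_f_f)
      finally show "mat_map (P j) (B j) (w i j) \<in> order_cone (P j) (le j)" using c by simp
    next
      fix idx assume idx: "idx \<in> tidx k P"
      have "T idx = tensor_map k P B (tensor_map k P A T) idx"
        using tmap_comp[OF finP Bd idx] by simp
      also have "\<dots> = (\<Sum>i<r. outer k (\<lambda>j. mat_map (P j) (B j) (w i j)) idx)"
        using tmap_decomp[OF finP Seq idx] .
      finally show "T idx = (\<Sum>i<r. outer k (\<lambda>j. mat_map (P j) (B j) (w i j)) idx)" .
    qed
  qed
  then show ?thesis unfolding NDrank_def nnrank_def by simp
qed

end
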